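(* Let $n\ge 1$. The number of preference profiles with $n$ men and $n$ women that have at least one pair of outcasts equals $n^4 (n-1)!^{2n}$ if $n\neq 2$, and equals $14$ if $n=2$.
   Context: A preference profile for $n$ (labeled) men and $n$ (labeled) women consists of, for each man, a strict ranking of the women (bijection to $\{1,\dots,n\}$, 1 = favorite, $n$ = least favorite), and for each woman, a strict ranking of the men. A man $M$ and a woman $W$ form a pair of outcasts if every woman other than $W$ ranks $M$ last (rank $n$) and every man other than $M$ ranks $W$ last (rank $n$); the rankings $M$ and $W$ give each other are arbitrary. *)

theory Defs
  imports "HOL-Library.FuncSet"
begin

text \<open>People are indexed by {0..<n}. A ranking is a bijection {0..<n} -> {1..n}
  (1 = favourite), extensional (undefined outside {0..<n}) so that sets of
  rankings are finite.\<close>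
definition rankings :: "nat \<Rightarrow> (nat \<Rightarrow> nat) set" where
  "rankings n = {r \<in> {0..<n} \<rightarrow>\<^sub>E {1..n}. bij_betw r {0..<n} {1..n}}"

text \<open>A profile is a pair (pm, pw): pm M W is the rank man M gives woman W,
  pw W M is the rank woman W gives man M.\<close>
definition profiles :: "nat \<Rightarrow> ((nat \<Rightarrow> nat \<Rightarrow> nat) \<times> (nat \<Rightarrow> nat \<Rightarrow> nat)) set" where
  "profiles n = ({0..<n} \<rightarrow>\<^sub>E rankings n) \<times> ({0..<n} \<rightarrow>\<^sub>E rankings n)"

definition outcast_pair ::
  "nat \<Rightarrow> (nat \<Rightarrow> nat \<Rightarrow> nat) \<times> (nat \<Rightarrow> nat \<Rightarrow> nat) \<Rightarrow> nat \<Rightarrow> nat \<Rightarrow> bool" where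
  "outcast_pair n P M W \<longleftrightarrow> M < n \<and> W < n \<and>
     (\<forall>W'<n. W' \<noteq> W \<longrightarrow> snd P W' M = n) \<and>
     (\<forall>M'<n. M' \<noteq> M \<longrightarrow> fst P M' W = n)"

end

theory Submission
  imports Defs "HOL-Combinatorics.Permutations"
begin

lemma finite_rankings: "finite (rankings n)"
proof -
  have "rankings n \<subseteq> {0..<n} \<rightarrow>\<^sub>E {1..n}" by (auto simp: rankings_def)
  thus ?thesis by (rule finite_subset) (simp add: finite_PiE)
qed

lemma rank_inj: "r \<in> rankings n \<Longrightarrow> i < n \<Longrightarrow> i' < n \<Longrightarrow> r i = r i' \<Longrightarrow> i = i'"
  unfolding rankings_def bij_betw_def inj_on_def by auto

lemma card_rankings: "card (rankings n) = fact n"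
proof -
  define f where "f = (\<lambda>(r::nat\<Rightarrow>nat) i. if i < n then r i - 1 else i)"
  define g where "g = (\<lambda>(p::nat\<Rightarrow>nat) i. if i < n then p i + 1 else undefined)"
  have "bij_betw f (rankings n) {p. p permutes {0..<n}}"
  proof (rule bij_betw_byWitness[where f'=g])
    show "\<forall>a\<in>rankings n. g (f a) = a"
    proof
      fix r assume r: "r \<in> rankings n"
      show "g (f r) = r"
      proof
        fix i show "g (f r) i = r i"
          using r unfolding f_def g_def rankings_def
          by (cases "i < n") (auto simp: PiE_def extensional_def Pi_def)
      qed
    qed
    show "\<forall>a'\<in>{p. p permutes {0..<n}}. f (g a') = a'"
    proof
      fix p assume p: "p \<in> {p. p permutes {0..<n}}"
      show "f (g p) = p"
      proof
        fix i show "f (g p) i = p i"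
          using p unfolding f_def g_def by (auto simp: permutes_not_in)
      qed
    qed
    show "f ` rankings n \<subseteq> {p. p permutes {0..<n}}"
    proof clarify
      fix r assume r: "r \<in> rankings n"
      have b: "bij_betw r {0..<n} {1..n}" using r by (simp add: rankings_def)
      have b2: "bij_betw (\<lambda>k. k - 1) {1..n} {0..<n}"
        by (rule bij_betw_byWitness[where f'=Suc]) auto
      have "bij_betw ((\<lambda>k. k - 1) \<circ> r) {0..<n} {0..<n}" using b b2 by (rule bij_betw_trans)
      hence "bij_betw (f r) {0..<n} {0..<n}"
        by (rule bij_betw_cong[THEN iffD1, rotated]) (auto simp: f_def)
      thus "f r permutes {0..<n}" by (rule bij_imp_permutes) (auto simp: f_def)
    qed
    show "g ` {p. p permutes {0..<n}} \<subseteq> rankings n"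
    proof clarify
      fix p assume p: "p permutes {0..<n}"
      have pl: "\<And>x. x<n \<Longrightarrow> p x < n" using permutes_in_image[OF p] by auto
      have b: "bij_betw p {0..<n} {0..<n}" using p by (rule permutes_imp_bij)
      have b2: "bij_betw Suc {0..<n} {1..n}"
        by (rule bij_betw_byWitness[where f'="\<lambda>k. k - 1"]) auto
      have "bij_betw (Suc \<circ> p) {0..<n} {1..n}" using b b2 by (rule bij_betw_trans)
      hence "bij_betw (g p) {0..<n} {1..n}"
        by (rule bij_betw_cong[THEN iffD1, rotated]) (auto simp: g_def)
      moreover have "g p \<in> {0..<n} \<rightarrow>\<^sub>E {1..n}"
        using pl by (auto simp: g_def PiE_def extensional_def Suc_le_eq)
      ultimately show "g p \<in> rankings n" by (simp add: rankings_def)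
    qed
  qed
  hence "card (rankings n) = card {p. p permutes {0..<n}}" by (rule bij_betw_same_card)
  also have "\<dots> = fact n" by (rule card_permutations) auto
  finally show ?thesis .
qed

definition Tr :: "nat \<Rightarrow> nat \<Rightarrow> (nat \<Rightarrow> nat) \<Rightarrow> nat \<Rightarrow> nat" where
  "Tr n k r = (\<lambda>i. if i < n then Transposition.transpose k n (r i) else undefined)"

lemma Tr_in: assumes r: "r \<in> rankings n" and k: "k \<in> {1..n}" shows "Tr n k r \<in> rankings n"
proof -
  have b: "bij_betw r {0..<n} {1..n}" using r by (simp add: rankings_def)
  have b2: "bij_betw (Transposition.transpose k n) {1..n} {1..n}" using k by simp
  have bc: "bij_betw (Transposition.transpose k n \<circ> r) {0..<n} {1..n}" using b b2 by (rule bij_betw_trans)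
  hence "bij_betw (Tr n k r) {0..<n} {1..n}"
    by (rule bij_betw_cong[THEN iffD1, rotated]) (auto simp: Tr_def)
  moreover have "Tr n k r \<in> {0..<n} \<rightarrow>\<^sub>E {1..n}"
    using bij_betwE[OF bc] unfolding Tr_def by auto
  ultimately show ?thesis by (simp add: rankings_def)
qed

lemma Tr_Tr: assumes r: "r \<in> rankings n" shows "Tr n k (Tr n k r) = r"
proof
  fix i show "Tr n k (Tr n k r) i = r i"
    using r unfolding Tr_def rankings_def by (auto simp: PiE_def extensional_def)
qed

lemma Tr_j: "j < n \<Longrightarrow> Tr n k r j = Transposition.transpose k n (r j)"
  by (simp add: Tr_def)

lemma card_fix_k: assumes j: "j < n" and k: "k \<in> {1..n}"
  shows "card {r \<in> rankings n. r j = k} = card {r \<in> rankings n. r j = n}"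
proof -
  have "bij_betw (Tr n k) {r \<in> rankings n. r j = k} {r \<in> rankings n. r j = n}"
  proof (rule bij_betw_byWitness[where f'="Tr n k"])
  show "\<forall>a\<in>{r \<in> rankings n. r j = k}. Tr n k (Tr n k a) = a" using Tr_Tr by blast
  show "\<forall>a\<in>{r \<in> rankings n. r j = n}. Tr n k (Tr n k a) = a" using Tr_Tr by blast
  show "Tr n k ` {r \<in> rankings n. r j = k} \<subseteq> {r \<in> rankings n. r j = n}"
    using Tr_in[OF _ k] Tr_j[OF j] by auto
  show "Tr n k ` {r \<in> rankings n. r j = n} \<subseteq> {r \<in> rankings n. r j = k}"
    using Tr_in[OF _ k] Tr_j[OF j] by auto
  qed
  thus ?thesis by (rule bij_betw_same_card)
qed

lemma card_fix: assumes j: "j < n" shows "card {r \<in> rankings n. r j = n} = fact (n - 1)"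
proof -
  have mem: "r j \<in> {1..n}" if r: "r \<in> rankings n" for r
  proof -
    have "r \<in> {0..<n} \<rightarrow>\<^sub>E {1..n}" using r by (simp add: rankings_def)
    thus ?thesis using j by (metis PiE_mem atLeastLessThan_iff zero_le)
  qed
  have eq: "rankings n = (\<Union>k\<in>{1..n}. {r \<in> rankings n. r j = k})"
    using mem by auto
  have "fact n = card (rankings n)" by (simp add: card_rankings)
  also have "\<dots> = card (\<Union>k\<in>{1..n}. {r \<in> rankings n. r j = k})" using eq by (rule arg_cong)
  also have "\<dots> = (\<Sum>k\<in>{1..n}. card {r \<in> rankings n. r j = k})"
    by (rule card_UN_disjoint) (simp_all add: finite_rankings, blast)
  also have "\<dots> = (\<Sum>k\<in>{1..n}. card {r \<in> rankings n. r j = n})"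
    by (rule sum.cong[OF refl], rule card_fix_k[OF j]) simp
  also have "\<dots> = n * card {r \<in> rankings n. r j = n}" by simp
  finally have "fact n = n * card {r \<in> rankings n. r j = n}" .
  moreover have "fact n = n * fact (n - 1)" using j by (cases n) auto
  ultimately show ?thesis using j by simp
qed

definition Fx :: "nat \<Rightarrow> nat \<Rightarrow> (nat \<Rightarrow> nat) set" where
  "Fx n j = {r \<in> rankings n. r j = n}"

definition SS where "SS n M W = {P \<in> profiles n. outcast_pair n P M W}"

lemma Fx_Int1[simp]: "rankings n \<inter> Fx n j = Fx n j" by (auto simp: Fx_def)
lemma Fx_Int2[simp]: "Fx n j \<inter> rankings n = Fx n j" by (auto simp: Fx_def)

lemma card_Fx: "j < n \<Longrightarrow> card (Fx n j) = fact (n - 1)"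
  unfolding Fx_def by (rule card_fix)

lemma finite_profiles: "finite (profiles n)"
  by (simp add: profiles_def finite_PiE finite_rankings)

lemma SS_eq: assumes "M < n" "W < n"
  shows "SS n M W = (\<Pi>\<^sub>E M'\<in>{0..<n}. if M' = M then rankings n else Fx n W) \<times>
                    (\<Pi>\<^sub>E W'\<in>{0..<n}. if W' = W then rankings n else Fx n M)"
  using assms by (auto simp: SS_def profiles_def outcast_pair_def Fx_def PiE_iff split: if_splits)

lemma prod_special: assumes "M < n" "W < n"
  shows "(\<Prod>i\<in>{0..<n}. card (if i = M then rankings n else Fx n W)) = n * fact (n - 1) ^ n"
proof -
  have "(\<Prod>i\<in>{0..<n}. card (if i = M then rankings n else Fx n W)) =
     card (rankings n) * (\<Prod>i\<in>{0..<n} - {M}. card (if i = M then rankings n else Fx n W))"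
    using assms by (subst prod.remove[of _ M]) auto
  also have "(\<Prod>i\<in>{0..<n} - {M}. card (if i = M then rankings n else Fx n W)) =
       (\<Prod>i\<in>{0..<n} - {M}. fact (n - 1))"
    using assms by (intro prod.cong) (auto simp: card_Fx)
  also have "\<dots> = fact (n - 1) ^ (n - 1)" using assms by simp
  finally have "(\<Prod>i\<in>{0..<n}. card (if i = M then rankings n else Fx n W)) = fact n * fact (n - 1) ^ (n - 1)"
    by (simp add: card_rankings)
  also have "\<dots> = n * fact (n - 1) ^ n" using assms by (cases n) (auto simp: algebra_simps)
  finally show ?thesis .
qed

lemma card_SS: assumes "M < n" "W < n"
  shows "card (SS n M W) = n ^ 2 * fact (n - 1) ^ (2 * n)"
proof -
  have "card (SS n M W) = (n * fact (n - 1) ^ n) * (n * fact (n - 1) ^ n)"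
    using assms by (simp add: SS_eq card_cartesian_product card_PiE prod_special)
  thus ?thesis by (simp add: power2_eq_square power_mult mult_2 power_add)
qed

lemma dis_M: assumes "W \<noteq> W'" "M < n" "2 \<le> n"
  shows "SS n M W \<inter> SS n M W' = {}"
proof (rule ccontr)
  assume "SS n M W \<inter> SS n M W' \<noteq> {}"
  then obtain P where P: "P \<in> SS n M W" "P \<in> SS n M W'" by blast
  define M' where "M' = (if M = 0 then 1 else 0::nat)"
  have M': "M' < n" "M' \<noteq> M" using assms by (auto simp: M'_def)
  have r: "fst P M' \<in> rankings n" using P(1) M'(1) by (auto simp: SS_def profiles_def)
  have "fst P M' W = n" "fst P M' W' = n" "W < n" "W' < n" using P M' by (auto simp: SS_def outcast_pair_def)
  thus False using rank_inj[OF r] assms(1) by metis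
qed

lemma dis_W: assumes "M \<noteq> M'" "W'' < n" "W'' \<noteq> W" "W'' \<noteq> W'"
  shows "SS n M W \<inter> SS n M' W' = {}"
proof (rule ccontr)
  assume "SS n M W \<inter> SS n M' W' \<noteq> {}"
  then obtain P where P: "P \<in> SS n M W" "P \<in> SS n M' W'" by blast
  have r: "snd P W'' \<in> rankings n" using P(1) assms(2) by (auto simp: SS_def profiles_def)
  have "snd P W'' M = n" "snd P W'' M' = n" "M < n" "M' < n" using P assms by (auto simp: SS_def outcast_pair_def)
  thus False using rank_inj[OF r] assms(1) by metis
qed

lemma union_eq: "{P \<in> profiles n. \<exists>M<n. \<exists>W<n. outcast_pair n P M W} =
   (\<Union>x\<in>{0..<n} \<times> {0..<n}. SS n (fst x) (snd x))"
  apply (auto simp: SS_def) apply (meson atLeastLessThan_iff zero_le) by blast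

lemma disj_gen: assumes False: "n \<noteq> 2" and H: "a < n" "b < n" "c < n" "d < n" "(a, b) \<noteq> (c, d)"
  shows "SS n a b \<inter> SS n c d = {}"
proof (cases "a = c")
  case True
  thus ?thesis using dis_M[of b d a n] H by auto
next
  case ac: False
  hence "n \<ge> 3" using H False by linarith
  then obtain w where "w < n" "w \<noteq> b" "w \<noteq> d"
    by (metis (full_types) less_le_trans nat_neq_iff numeral_3_eq_3 lessI Suc_lessD zero_less_Suc)
  thus ?thesis using dis_W[of a c w n b d] ac by auto
qed

theorem mainTheorem8:
  fixes n :: nat
  assumes "n \<ge> 1"
  shows "card {P \<in> profiles n. \<exists>M<n. \<exists>W<n. outcast_pair n P M W} =
    (if n = 2 then 14 else n ^ 4 * fact (n - 1) ^ (2 * n))"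
proof (cases "n = 2")
  case False
  have "card (\<Union>x\<in>{0..<n} \<times> {0..<n}. SS n (fst x) (snd x)) =
        (\<Sum>x\<in>{0..<n} \<times> {0..<n}. card (SS n (fst x) (snd x)))"
  proof (rule card_UN_disjoint)
    show "finite ({0..<n} \<times> {0..<n})" by simp
    show "\<forall>i\<in>{0..<n} \<times> {0..<n}. finite (SS n (fst i) (snd i))"
      using finite_profiles by (simp add: SS_def)
    show "\<forall>i\<in>{0..<n} \<times> {0..<n}. \<forall>j\<in>{0..<n} \<times> {0..<n}. i \<noteq> j \<longrightarrow>
            SS n (fst i) (snd i) \<inter> SS n (fst j) (snd j) = {}"
      using disj_gen[OF False] by auto
  qed
  also have "\<dots> = (\<Sum>x\<in>{0..<n} \<times> {0..<n}. n ^ 2 * fact (n - 1) ^ (2 * n))"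
    by (rule sum.cong) (auto simp: card_SS)
  also have "\<dots> = n ^ 4 * fact (n - 1) ^ (2 * n)"
    by (simp add: power2_eq_square power4_eq_xxxx)
  finally show ?thesis using False by (simp add: union_eq)
next
  case True
  have e2: "{0..<2::nat} = {0, 1}" by auto
  have U: "{P \<in> profiles n. \<exists>M<n. \<exists>W<n. outcast_pair n P M W} =
     (SS 2 0 0 \<union> SS 2 1 1) \<union> (SS 2 0 1 \<union> SS 2 1 0)"
    unfolding union_eq True e2 by auto
  have c: "card (SS 2 a b) = 4" if "a < 2" "b < 2" for a b
    using card_SS[OF that] by simp
  have fin: "finite (SS 2 a b)" for a b using finite_profiles[of 2] by (simp add: SS_def)
  have i1: "card (SS 2 0 0 \<inter> SS 2 1 1) = 1"
    by (simp add: SS_eq Times_Int_Times PiE_Int card_cartesian_product card_PiE e2 card_Fx)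
  have i2: "card (SS 2 0 1 \<inter> SS 2 1 0) = 1"
    by (simp add: SS_eq Times_Int_Times PiE_Int card_cartesian_product card_PiE e2 card_Fx)
  have u1: "card (SS 2 0 0 \<union> SS 2 1 1) = 7"
    using card_Un_Int[OF fin fin, of 0 0 1 1] i1 c[of 0 0] c[of 1 1] by simp
  have u2: "card (SS 2 0 1 \<union> SS 2 1 0) = 7"
    using card_Un_Int[OF fin fin, of 0 1 1 0] i2 c[of 0 1] c[of 1 0] by simp
  have d: "(SS 2 0 0 \<union> SS 2 1 1) \<inter> (SS 2 0 1 \<union> SS 2 1 0) = {}"
    using dis_M[of 0 1 0 2] dis_M[of 1 0 1 2] dis_W[of 0 1 1 2 0 0] dis_W[of 1 0 0 2 1 1] by auto
  have "card ((SS 2 0 0 \<union> SS 2 1 1) \<union> (SS 2 0 1 \<union> SS 2 1 0)) = 14"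
    using card_Un_disjoint[OF _ _ d] fin u1 u2 by simp
  thus ?thesis using U True by simp
qed

end
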